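(* Let $p,q\ge1$, $N\ge1$, let $\mu$ be a $q\times p$ matrix of measures, and assume $\mathscr M_N$ admits a Gauss--Borel factorization $\mathscr M_N=\mathscr L_N^{-1}\mathscr U_N^{-1}$. Write $N=N_qq+s_q=N_pp+s_p$ with $s_q\in\{0,\dots,q-1\}$, $s_p\in\{0,\dots,p-1\}$. Then \[\mathscr M^{[N+q,N]}=\begin{pmatrix}\mathscr L_N^{-1}\\ L^{[N+q,N]}\end{pmatrix}\mathscr U_N^{-1},\qquad \mathscr M^{[N,N+p]}=\mathscr L_N^{-1}\begin{pmatrix}\mathscr U_N^{-1} & U^{[N,N+p]}\end{pmatrix},\] where $L^{[N+q,N]}\in\mathbb R^{q\times N}$ and $U^{[N,N+p]}\in\mathbb R^{N\times p}$ are given by \[L^{[N+q,N]}=\int x^{N_q}\,\mathfrak X_{[q,s_q]}(x)\,\mathrm d\mu(x)\,A^{[N]}(x),\qquad U^{[N,N+p]}=\int B^{[N]}(x)\,\mathrm d\mu(x)\,\big(\mathfrak X_{[p,s_p]}(x)\big)^\top x^{N_p}.\]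
   Context: All matrices are indexed from $0$. $\mu$ is a $q\times p$ matrix of real measures with finite moments. For $r,n\ge1$, $X^{[n]}_{[r]}(x)$ is the $n\times r$ matrix whose row $k$ is $x^{\lfloor k/r\rfloor}e_{k\bmod r}^\top$ ($e_0,\dots,e_{r-1}$ standard basis of $\mathbb R^r$). Moment matrices: $\mathscr M^{[n,m]}=\int X^{[n]}_{[q]}\,\mathrm d\mu\,(X^{[m]}_{[p]})^\top$, $\mathscr M_n=\mathscr M^{[n,n]}$. A Gauss--Borel factorization is $\mathscr M_N=\mathscr L_N^{-1}\mathscr U_N^{-1}$ with $\mathscr L_N$ nonsingular lower triangular and $\mathscr U_N$ nonsingular upper triangular. $B^{[N]}(x):=\mathscr L_NX^{[N]}_{[q]}(x)$ ($N\times q$) and $A^{[N]}(x):=(X^{[N]}_{[p]}(x))^\top\mathscr U_N$ ($p\times N$). For $0\le s\le r$, $\mathfrak X_{[r,s]}(x)$ is the $r\times r$ block matrix $\begin{pmatrix}0_{(r-s)\times s}&I_{r-s}\\ xI_s&0_{s\times(r-s)}\end{pmatrix}$. *)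

theory Defs
  imports "HOL-Analysis.Analysis" "Jordan_Normal_Form.Matrix"
begin

text \<open>A real (signed) measure on the real line, represented by a pair of (nonnegative)
  Borel measures (its positive and negative parts), with all moments finite.\<close>

type_synonym signed_measure = "real measure \<times> real measure"

definition finite_moments :: "signed_measure \<Rightarrow> bool" where
  "finite_moments m \<longleftrightarrow> sets (fst m) = sets borel \<and> sets (snd m) = sets borel \<and>
     (\<forall>k::nat. integrable (fst m) (\<lambda>x. x ^ k) \<and> integrable (snd m) (\<lambda>x. x ^ k))"

definition sint :: "signed_measure \<Rightarrow> (real \<Rightarrow> real) \<Rightarrow> real" where
  "sint m f = integral\<^sup>L (fst m) f - integral\<^sup>L (snd m) f"

definition mat_integral :: "nat \<Rightarrow> nat \<Rightarrow> nat \<Rightarrow> nat \<Rightarrow> (nat \<Rightarrow> nat \<Rightarrow> signed_measure)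
    \<Rightarrow> (real \<Rightarrow> real mat) \<Rightarrow> (real \<Rightarrow> real mat) \<Rightarrow> real mat" where
  "mat_integral n m q p \<mu> F G =
     mat n m (\<lambda>(a,b). \<Sum>i<q. \<Sum>j<p. sint (\<mu> i j) (\<lambda>x. F x $$ (a,i) * G x $$ (j,b)))"

definition Xmat :: "nat \<Rightarrow> nat \<Rightarrow> real \<Rightarrow> real mat" where
  "Xmat r n x = mat n r (\<lambda>(k,j). if j = k mod r then x ^ (k div r) else 0)"

text \<open>The r x r matrix frak X_{[r,s]}(x) = [[0, I_{r-s}], [x I_s, 0]].\<close>
definition Xfrak :: "nat \<Rightarrow> nat \<Rightarrow> real \<Rightarrow> real mat" where
  "Xfrak r s x = mat r r (\<lambda>(i,j). if i < r - s then (if j = i + s then 1 else 0)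
                                   else (if j + (r - s) = i then x else 0))"

definition moment_mat :: "nat \<Rightarrow> nat \<Rightarrow> (nat \<Rightarrow> nat \<Rightarrow> signed_measure) \<Rightarrow> nat \<Rightarrow> nat \<Rightarrow> real mat" where
  "moment_mat q p \<mu> n m = mat_integral n m q p \<mu> (Xmat q n) (\<lambda>x. transpose_mat (Xmat p m x))"

definition lower_triangular_mat :: "real mat \<Rightarrow> bool" where
  "lower_triangular_mat A \<longleftrightarrow> upper_triangular (transpose_mat A)"

definition append_cols_mat :: "real mat \<Rightarrow> real mat \<Rightarrow> real mat" where
  "append_cols_mat A B = four_block_mat A B (0\<^sub>m 0 (dim_col A)) (0\<^sub>m 0 (dim_col B))"

end

theory Submission imports Defs "HOL-Computational_Algebra.Polynomial" begin

definition isp :: "(real \<Rightarrow> real) \<Rightarrow> bool" where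
  "isp f \<longleftrightarrow> (\<exists>P::real poly. \<forall>x. f x = poly P x)"

lemma isp_const[intro]: "isp (\<lambda>x. c)"
  unfolding isp_def by (rule exI[of _ "[:c:]"]) simp
lemma isp_pow[intro]: "isp (\<lambda>x. x ^ k)"
  unfolding isp_def by (rule exI[of _ "monom 1 k"]) (simp add: poly_monom)
lemma isp_id[intro]: "isp (\<lambda>x. x)"
  unfolding isp_def by (rule exI[of _ "[:0,1:]"]) simp
lemma isp_mult[intro]: "isp f \<Longrightarrow> isp g \<Longrightarrow> isp (\<lambda>x. f x * g x)"
  unfolding isp_def by (metis poly_mult)
lemma isp_add[intro]: "isp f \<Longrightarrow> isp g \<Longrightarrow> isp (\<lambda>x. f x + g x)"
  unfolding isp_def by (metis poly_add)
lemma isp_sum[intro]: "(\<And>c. c \<in> C \<Longrightarrow> isp (f c)) \<Longrightarrow> isp (\<lambda>x. \<Sum>c\<in>C. f c x)"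
proof (induction C rule: infinite_finite_induct)
  case (insert a F) then show ?case using isp_add[of "f a" "\<lambda>x. \<Sum>c\<in>F. f c x"] by simp
qed auto
lemma isp_if[intro]: "isp f \<Longrightarrow> isp g \<Longrightarrow> isp (\<lambda>x. if b then f x else g x)"
  by (cases b) auto

lemma isp_integrable:
  assumes "finite_moments m" "isp f"
  shows "integrable (fst m) f \<and> integrable (snd m) f"
proof -
  obtain P where P: "\<And>x. f x = poly P x" using assms(2) unfolding isp_def by blast
  have f: "f = (\<lambda>x. \<Sum>i\<le>degree P. coeff P i * x ^ i)" using P by (simp add: poly_altdef fun_eq_iff)
  show ?thesis using assms(1) unfolding f finite_moments_def by auto
qed

lemma sint_sum:
  assumes "finite C" "\<And>c. c \<in> C \<Longrightarrow> integrable (fst m) (f c) \<and> integrable (snd m) (f c)"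
  shows "sint m (\<lambda>x. \<Sum>c\<in>C. f c x) = (\<Sum>c\<in>C. sint m (f c))"
  unfolding sint_def using assms by (simp add: integral_sum sum_subtractf)

lemma sint_cmult: "sint m (\<lambda>x. a * f x) = a * sint m f"
  unfolding sint_def by (simp add: right_diff_distrib)

lemma mi_right:
  assumes M: "M \<in> carrier_mat m m'" and G: "\<And>x. G x \<in> carrier_mat p m"
  and I: "\<And>a i j c. a < n \<Longrightarrow> i < q \<Longrightarrow> j < p \<Longrightarrow> c < m \<Longrightarrow>
     integrable (fst (\<mu> i j)) (\<lambda>x. F x $$ (a,i) * G x $$ (j,c)) \<and> integrable (snd (\<mu> i j)) (\<lambda>x. F x $$ (a,i) * G x $$ (j,c))"
  shows "mat_integral n m q p \<mu> F G * M = mat_integral n m' q p \<mu> F (\<lambda>x. G x * M)"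
proof (rule eq_matI)
  fix a b assume a: "a < dim_row (mat_integral n m' q p \<mu> F (\<lambda>x. G x * M))"
    and b: "b < dim_col (mat_integral n m' q p \<mu> F (\<lambda>x. G x * M))"
  then have a: "a < n" and b: "b < m'" by (auto simp: mat_integral_def)
  have "(mat_integral n m q p \<mu> F G * M) $$ (a,b) =
     (\<Sum>c<m. (\<Sum>i<q. \<Sum>j<p. sint (\<mu> i j) (\<lambda>x. F x $$ (a,i) * G x $$ (j,c))) * M $$ (c,b))"
    using a b M by (simp add: mat_integral_def scalar_prod_def lessThan_atLeast0)
  also have "\<dots> = (\<Sum>i<q. \<Sum>j<p. \<Sum>c<m. M $$ (c,b) * sint (\<mu> i j) (\<lambda>x. F x $$ (a,i) * G x $$ (j,c)))"
  proof -
    have "(\<Sum>c<m. (\<Sum>i<q. \<Sum>j<p. sint (\<mu> i j) (\<lambda>x. F x $$ (a,i) * G x $$ (j,c))) * M $$ (c,b))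
      = (\<Sum>c<m. \<Sum>i<q. \<Sum>j<p. M $$ (c,b) * sint (\<mu> i j) (\<lambda>x. F x $$ (a,i) * G x $$ (j,c)))"
      unfolding sum_distrib_right by (simp add: mult.commute)
    also have "\<dots> = (\<Sum>i<q. \<Sum>c<m. \<Sum>j<p. M $$ (c,b) * sint (\<mu> i j) (\<lambda>x. F x $$ (a,i) * G x $$ (j,c)))"
      by (rule sum.swap)
    also have "\<dots> = (\<Sum>i<q. \<Sum>j<p. \<Sum>c<m. M $$ (c,b) * sint (\<mu> i j) (\<lambda>x. F x $$ (a,i) * G x $$ (j,c)))"
      by (rule sum.cong[OF refl], rule sum.swap)
    finally show ?thesis .
  qed
  also have "\<dots> = (\<Sum>i<q. \<Sum>j<p. sint (\<mu> i j) (\<lambda>x. F x $$ (a,i) * (G x * M) $$ (j,b)))"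
  proof (intro sum.cong refl)
    fix i j assume i: "i \<in> {..<q}" and j: "j \<in> {..<p}"
    have e: "(\<lambda>x. F x $$ (a,i) * (G x * M) $$ (j,b)) = (\<lambda>x. \<Sum>c<m. M $$ (c,b) * (F x $$ (a,i) * G x $$ (j,c)))"
    proof (rule ext)
      fix x
      have Gx: "G x \<in> carrier_mat p m" by (rule G)
      show "F x $$ (a,i) * (G x * M) $$ (j,b) = (\<Sum>c<m. M $$ (c,b) * (F x $$ (a,i) * G x $$ (j,c)))"
        using Gx M i j b by (auto simp: scalar_prod_def sum_distrib_left lessThan_atLeast0 mult_ac intro!: sum.cong)
    qed
    show "(\<Sum>c<m. M $$ (c,b) * sint (\<mu> i j) (\<lambda>x. F x $$ (a,i) * G x $$ (j,c))) = sint (\<mu> i j) (\<lambda>x. F x $$ (a,i) * (G x * M) $$ (j,b))"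
      unfolding e using I[OF a] i j by (subst sint_sum) (auto simp: sint_cmult)
  qed
  also have "\<dots> = mat_integral n m' q p \<mu> F (\<lambda>x. G x * M) $$ (a,b)"
    using a b by (simp add: mat_integral_def)
  finally show "(mat_integral n m q p \<mu> F G * M) $$ (a,b) = mat_integral n m' q p \<mu> F (\<lambda>x. G x * M) $$ (a,b)" .
qed (use M in \<open>auto simp: mat_integral_def\<close>)

lemma mi_left:
  assumes M: "M \<in> carrier_mat n' n" and F: "\<And>x. F x \<in> carrier_mat n q"
  and I: "\<And>a i j b. a < n \<Longrightarrow> i < q \<Longrightarrow> j < p \<Longrightarrow> b < m \<Longrightarrow>
     integrable (fst (\<mu> i j)) (\<lambda>x. F x $$ (a,i) * G x $$ (j,b)) \<and> integrable (snd (\<mu> i j)) (\<lambda>x. F x $$ (a,i) * G x $$ (j,b))"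
  shows "M * mat_integral n m q p \<mu> F G = mat_integral n' m q p \<mu> (\<lambda>x. M * F x) G"
proof (rule eq_matI)
  fix a b assume a: "a < dim_row (mat_integral n' m q p \<mu> (\<lambda>x. M * F x) G)"
    and b: "b < dim_col (mat_integral n' m q p \<mu> (\<lambda>x. M * F x) G)"
  then have a: "a < n'" and b: "b < m" by (auto simp: mat_integral_def)
  have "(M * mat_integral n m q p \<mu> F G) $$ (a,b) =
     (\<Sum>c<n. M $$ (a,c) * (\<Sum>i<q. \<Sum>j<p. sint (\<mu> i j) (\<lambda>x. F x $$ (c,i) * G x $$ (j,b))))"
    using a b M by (simp add: mat_integral_def scalar_prod_def lessThan_atLeast0)
  also have "\<dots> = (\<Sum>i<q. \<Sum>j<p. \<Sum>c<n. M $$ (a,c) * sint (\<mu> i j) (\<lambda>x. F x $$ (c,i) * G x $$ (j,b)))"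
    by (simp add: sum_distrib_left sum.swap[of _ "{..<n}"])
  also have "\<dots> = (\<Sum>i<q. \<Sum>j<p. sint (\<mu> i j) (\<lambda>x. (M * F x) $$ (a,i) * G x $$ (j,b)))"
  proof (intro sum.cong refl)
    fix i j assume i: "i \<in> {..<q}" and j: "j \<in> {..<p}"
    have e: "(\<lambda>x. (M * F x) $$ (a,i) * G x $$ (j,b)) = (\<lambda>x. \<Sum>c<n. M $$ (a,c) * (F x $$ (c,i) * G x $$ (j,b)))"
    proof (rule ext)
      fix x
      have Fx: "F x \<in> carrier_mat n q" by (rule F)
      show "(M * F x) $$ (a,i) * G x $$ (j,b) = (\<Sum>c<n. M $$ (a,c) * (F x $$ (c,i) * G x $$ (j,b)))"
        using Fx M i j a by (auto simp: scalar_prod_def sum_distrib_left lessThan_atLeast0 mult_ac intro!: sum.cong)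
    qed
    show "(\<Sum>c<n. M $$ (a,c) * sint (\<mu> i j) (\<lambda>x. F x $$ (c,i) * G x $$ (j,b))) = sint (\<mu> i j) (\<lambda>x. (M * F x) $$ (a,i) * G x $$ (j,b))"
      unfolding e using I[OF _ _ _ b] i j by (subst sint_sum) (auto simp: sint_cmult)
  qed
  also have "\<dots> = mat_integral n' m q p \<mu> (\<lambda>x. M * F x) G $$ (a,b)"
    using a b by (simp add: mat_integral_def)
  finally show "(M * mat_integral n m q p \<mu> F G) $$ (a,b) = mat_integral n' m q p \<mu> (\<lambda>x. M * F x) G $$ (a,b)" .
qed (use M in \<open>auto simp: mat_integral_def\<close>)

lemma append_rows_mult:
  assumes "A \<in> carrier_mat n1 k" "B \<in> carrier_mat n2 k" "C \<in> carrier_mat k m"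
  shows "(A @\<^sub>r B) * C = (A * C) @\<^sub>r (B * C)"
proof (rule eq_matI)
  fix i j assume i: "i < dim_row ((A * C) @\<^sub>r (B * C))" and j: "j < dim_col ((A * C) @\<^sub>r (B * C))"
  have "(A * C) @\<^sub>r (B * C) \<in> carrier_mat (n1 + n2) m" using assms by (intro carrier_append_rows) auto
  with i j have i: "i < n1 + n2" and j: "j < m" by auto
  have r: "row (A @\<^sub>r B) i = (if i < n1 then row A i else row B (i - n1))"
    by (rule eq_vecI) (use assms i in \<open>auto simp: append_rows_def\<close>)
  show "((A @\<^sub>r B) * C) $$ (i, j) = ((A * C) @\<^sub>r (B * C)) $$ (i, j)"
    using assms i j r by (auto simp: append_rows_def)
qed (use assms in \<open>auto simp: append_rows_def\<close>)

lemma append_cols_mult: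
  assumes "A \<in> carrier_mat n k" "B \<in> carrier_mat k m1" "C \<in> carrier_mat k m2"
  shows "A * append_cols_mat B C = append_cols_mat (A * B) (A * C)"
proof (rule eq_matI)
  fix i j assume i: "i < dim_row (append_cols_mat (A * B) (A * C))" and j: "j < dim_col (append_cols_mat (A * B) (A * C))"
  then have i: "i < n" and j: "j < m1 + m2" using assms by (auto simp: append_cols_mat_def)
  have r: "col (append_cols_mat B C) j = (if j < m1 then col B j else col C (j - m1))"
    by (rule eq_vecI) (use assms j in \<open>auto simp: append_cols_mat_def\<close>)
  show "(A * append_cols_mat B C) $$ (i, j) = append_cols_mat (A * B) (A * C) $$ (i, j)"
    using assms i j r by (auto simp: append_cols_mat_def)
qed (use assms in \<open>auto simp: append_cols_mat_def\<close>)

lemma dm: "(r::nat) < q \<Longrightarrow> (t*q + r) div q = t \<and> (t*q + r) mod q = r"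
  by simp

lemma Xfrak_entry:
  assumes "q \<ge> 1" "a < q" "i < q"
  shows "x ^ (N div q) * Xfrak q (N mod q) x $$ (a,i) = (if i = (N+a) mod q then x ^ ((N+a) div q) else 0)"
proof -
  define k s where "k = N div q" and "s = N mod q"
  have N: "N = k*q + s" and s: "s < q" using assms unfolding k_def s_def by auto
  show ?thesis
  proof (cases "a < q - s")
    case True
    then have "(N+a) div q = k" "(N+a) mod q = s + a" unfolding N using s
      by (auto simp: add.assoc)
    then show ?thesis using True assms unfolding Xfrak_def k_def[symmetric] s_def[symmetric] by auto
  next
    case False
    have eq: "N + a = (k+1)*q + (s + a - q)" unfolding N using False s by (simp add: algebra_simps)
    have lt: "s + a - q < q" using s assms by auto
    have "(N+a) div q = k+1" "(N+a) mod q = s + a - q" unfolding eq using dm[OF lt, of "k+1"] by simp_all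
    moreover have "(i + (q - s) = a) = (i = s + a - q)" using False s by auto
    ultimately show ?thesis using False assms unfolding Xfrak_def k_def[symmetric] s_def[symmetric] by auto
  qed
qed

lemma Xmat_carrier[simp]: "Xmat r n x \<in> carrier_mat n r"
  by (simp add: Xmat_def)
lemma Xfrak_carrier[simp]: "Xfrak r s x \<in> carrier_mat r r"
  by (simp add: Xfrak_def)
lemma Xdims[simp]: "dim_row (Xmat r n x) = n" "dim_col (Xmat r n x) = r"
  "dim_row (Xfrak r s x) = r" "dim_col (Xfrak r s x) = r"
  by (simp_all add: Xmat_def Xfrak_def)
lemma mat_integral_carrier[simp]: "mat_integral n m q p \<mu> F G \<in> carrier_mat n m"
  by (simp add: mat_integral_def)
lemma Xmat_idx: "k < n \<Longrightarrow> j < r \<Longrightarrow> Xmat r n x $$ (k,j) = (if j = k mod r then x^(k div r) else 0)"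
  by (simp add: Xmat_def)

lemma Fq_idx: "q \<ge> 1 \<Longrightarrow> a < q \<Longrightarrow> i < q \<Longrightarrow>
   (x^(N div q) \<cdot>\<^sub>m Xfrak q (N mod q) x) $$ (a,i) = (if i = (N+a) mod q then x^((N+a) div q) else 0)"
  using Xfrak_entry[of q a i x N] by simp

lemma Gp_idx: "p \<ge> 1 \<Longrightarrow> j < p \<Longrightarrow> b < p \<Longrightarrow>
   (x^(N div p) \<cdot>\<^sub>m transpose_mat (Xfrak p (N mod p) x)) $$ (j,b) = (if j = (N+b) mod p then x^((N+b) div p) else 0)"
  using Xfrak_entry[of p b j x N] by simp

definition ispm :: "nat \<Rightarrow> nat \<Rightarrow> (real \<Rightarrow> real mat) \<Rightarrow> bool" where
  "ispm n m A \<longleftrightarrow> (\<forall>x. A x \<in> carrier_mat n m) \<and> (\<forall>i<n. \<forall>j<m. isp (\<lambda>x. A x $$ (i,j)))"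

lemma ispm_const: "A \<in> carrier_mat n m \<Longrightarrow> ispm n m (\<lambda>x. A)"
  by (auto simp: ispm_def)

lemma ispm_mult: assumes "ispm n k A" "ispm k m B" shows "ispm n m (\<lambda>x. A x * B x)"
  unfolding ispm_def
proof (intro conjI allI impI)
  fix x show "A x * B x \<in> carrier_mat n m" using assms unfolding ispm_def by (meson mult_carrier_mat)
next
  fix i j assume i: "i < n" and j: "j < m"
  have e: "(\<lambda>x. (A x * B x) $$ (i,j)) = (\<lambda>x. \<Sum>l\<in>{0..<k}. A x $$ (i,l) * B x $$ (l,j))"
  proof (rule ext)
    fix x have "A x \<in> carrier_mat n k" "B x \<in> carrier_mat k m" using assms by (auto simp: ispm_def)
    then show "(A x * B x) $$ (i,j) = (\<Sum>l\<in>{0..<k}. A x $$ (i,l) * B x $$ (l,j))"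
      using i j by (auto simp: scalar_prod_def intro!: sum.cong)
  qed
  show "isp (\<lambda>x. (A x * B x) $$ (i,j))" unfolding e using assms i j
    by (intro isp_sum isp_mult) (auto simp: ispm_def)
qed

lemma ispm_Xmat: "ispm n r (Xmat r n)"
  by (auto simp: ispm_def Xmat_idx)

lemma ispm_tXmat: "ispm r n (\<lambda>x. transpose_mat (Xmat r n x))"
  by (auto simp: ispm_def Xmat_idx)

lemma ispm_Fq: "q \<ge> 1 \<Longrightarrow> ispm q q (\<lambda>x. x^(N div q) \<cdot>\<^sub>m Xfrak q (N mod q) x)"
  by (auto simp del: index_smult_mat simp add: ispm_def Fq_idx)

lemma ispm_Gp: "p \<ge> 1 \<Longrightarrow> ispm p p (\<lambda>x. x^(N div p) \<cdot>\<^sub>m transpose_mat (Xfrak p (N mod p) x))"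
  by (auto simp del: index_smult_mat simp add: ispm_def Gp_idx)

lemma ispm_integrable:
  assumes "ispm n q F" "ispm p m G" "\<And>i j. i < q \<Longrightarrow> j < p \<Longrightarrow> finite_moments (\<mu> i j)"
  shows "\<And>a i j c. a < n \<Longrightarrow> i < q \<Longrightarrow> j < p \<Longrightarrow> c < m \<Longrightarrow>
     integrable (fst (\<mu> i j)) (\<lambda>x. F x $$ (a,i) * G x $$ (j,c)) \<and> integrable (snd (\<mu> i j)) (\<lambda>x. F x $$ (a,i) * G x $$ (j,c))"
  using assms by (intro isp_integrable) (auto simp: ispm_def)

theorem mainTheorem5:
  fixes p q N :: nat
    and \<mu> :: "nat \<Rightarrow> nat \<Rightarrow> signed_measure"
    and L U Linv Uinv :: "real mat"
  assumes "p \<ge> 1" and "q \<ge> 1" and "N \<ge> 1"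
    and "\<And>i j. i < q \<Longrightarrow> j < p \<Longrightarrow> finite_moments (\<mu> i j)"
    and "L \<in> carrier_mat N N" and "lower_triangular_mat L" and "invertible_mat L"
    and "U \<in> carrier_mat N N" and "upper_triangular U" and "invertible_mat U"
    and "Linv \<in> carrier_mat N N" and "inverts_mat L Linv" and "inverts_mat Linv L"
    and "Uinv \<in> carrier_mat N N" and "inverts_mat U Uinv" and "inverts_mat Uinv U"
    and "moment_mat q p \<mu> N N = Linv * Uinv"
  shows "moment_mat q p \<mu> (N + q) N =
           (Linv @\<^sub>r mat_integral q N q p \<mu>
                (\<lambda>x. x ^ (N div q) \<cdot>\<^sub>m Xfrak q (N mod q) x)
                (\<lambda>x. transpose_mat (Xmat p N x) * U)) * Uinv \<and>
         moment_mat q p \<mu> N (N + p) =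
           Linv * append_cols_mat Uinv
             (mat_integral N p q p \<mu>
                (\<lambda>x. L * Xmat q N x)
                (\<lambda>x. x ^ (N div p) \<cdot>\<^sub>m transpose_mat (Xfrak p (N mod p) x)))"
proof -
  note A = assms
  define Fq where "Fq = (\<lambda>x. x ^ (N div q) \<cdot>\<^sub>m Xfrak q (N mod q) x)"
  define Gp where "Gp = (\<lambda>x. x ^ (N div p) \<cdot>\<^sub>m transpose_mat (Xfrak p (N mod p) x))"
  have UU: "U * Uinv = 1\<^sub>m N" using A(8,15) by (simp add: inverts_mat_def)
  have LL: "Linv * L = 1\<^sub>m N" using A(11,13) by (simp add: inverts_mat_def)
  have MNN: "moment_mat q p \<mu> N N \<in> carrier_mat N N" by (simp add: moment_mat_def)
  define Mq where "Mq = mat_integral q N q p \<mu> Fq (\<lambda>x. transpose_mat (Xmat p N x))"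
  have "mat_integral q N q p \<mu> Fq (\<lambda>x. transpose_mat (Xmat p N x) * U) * Uinv
       = mat_integral q N q p \<mu> Fq (\<lambda>x. transpose_mat (Xmat p N x) * U * Uinv)"
  proof (rule mi_right)
    show "\<And>x. transpose_mat (Xmat p N x) * U \<in> carrier_mat p N" using A(8) by auto
    have ig: "ispm p N (\<lambda>x. transpose_mat (Xmat p N x) * U)"
      by (rule ispm_mult[OF ispm_tXmat ispm_const[OF A(8)]])
    show "\<And>a i j c. a < q \<Longrightarrow> i < q \<Longrightarrow> j < p \<Longrightarrow> c < N \<Longrightarrow>
     integrable (fst (\<mu> i j)) (\<lambda>x. Fq x $$ (a,i) * (transpose_mat (Xmat p N x) * U) $$ (j,c)) \<and>
     integrable (snd (\<mu> i j)) (\<lambda>x. Fq x $$ (a,i) * (transpose_mat (Xmat p N x) * U) $$ (j,c))"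
      unfolding Fq_def by (rule ispm_integrable[OF ispm_Fq[OF A(2)] ig]) (rule A(4))
  qed (use A in auto)
  also have "\<dots> = Mq"
  proof -
    have "\<And>x. transpose_mat (Xmat p N x) * U * Uinv = transpose_mat (Xmat p N x)"
      using A(8,14) UU by (subst assoc_mult_mat[of _ p N]) auto
    then show ?thesis unfolding Mq_def by simp
  qed
  finally have LqU: "mat_integral q N q p \<mu> Fq (\<lambda>x. transpose_mat (Xmat p N x) * U) * Uinv = Mq" .
  have P1: "moment_mat q p \<mu> (N + q) N = moment_mat q p \<mu> N N @\<^sub>r Mq"
  proof (rule eq_matI)
    fix a b assume a: "a < dim_row (moment_mat q p \<mu> N N @\<^sub>r Mq)" and b: "b < dim_col (moment_mat q p \<mu> N N @\<^sub>r Mq)"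
    have "moment_mat q p \<mu> N N @\<^sub>r Mq \<in> carrier_mat (N + q) N" using MNN unfolding Mq_def
      by (intro carrier_append_rows) auto
    with a b have a: "a < N + q" and b: "b < N" by auto
    show "moment_mat q p \<mu> (N + q) N $$ (a, b) = (moment_mat q p \<mu> N N @\<^sub>r Mq) $$ (a, b)"
    proof (cases "a < N")
      case True
      then show ?thesis using a b
        by (auto simp: append_rows_def moment_mat_def mat_integral_def Xmat_idx intro!: sum.cong)
    next
      case False
      have "Fq x $$ (a - N, i) = Xmat q (N + q) x $$ (a, i)" if "i < q" for x i
        unfolding Fq_def using Fq_idx[of q "a - N" i x N] A(2) a False that by (simp add: Xmat_idx)
      then show ?thesis using a b False
        by (auto simp: append_rows_def moment_mat_def mat_integral_def Mq_def intro!: sum.cong)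
    qed
  qed (auto simp: append_rows_def moment_mat_def Mq_def mat_integral_def)
  have R1: "moment_mat q p \<mu> (N + q) N =
           (Linv @\<^sub>r mat_integral q N q p \<mu> Fq (\<lambda>x. transpose_mat (Xmat p N x) * U)) * Uinv"
    using append_rows_mult[OF A(11) _ A(14), of "mat_integral q N q p \<mu> Fq (\<lambda>x. transpose_mat (Xmat p N x) * U)" q]
    using P1 LqU A(17) by simp
  define Mp where "Mp = mat_integral N p q p \<mu> (Xmat q N) Gp"
  have "Linv * mat_integral N p q p \<mu> (\<lambda>x. L * Xmat q N x) Gp
       = mat_integral N p q p \<mu> (\<lambda>x. Linv * (L * Xmat q N x)) Gp"
  proof (rule mi_left)
    show "\<And>x. L * Xmat q N x \<in> carrier_mat N q" using A(5) by auto
    have ig: "ispm N q (\<lambda>x. L * Xmat q N x)"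
      by (rule ispm_mult[OF ispm_const[OF A(5)] ispm_Xmat])
    show "\<And>a i j c. a < N \<Longrightarrow> i < q \<Longrightarrow> j < p \<Longrightarrow> c < p \<Longrightarrow>
     integrable (fst (\<mu> i j)) (\<lambda>x. (L * Xmat q N x) $$ (a,i) * Gp x $$ (j,c)) \<and>
     integrable (snd (\<mu> i j)) (\<lambda>x. (L * Xmat q N x) $$ (a,i) * Gp x $$ (j,c))"
      unfolding Gp_def by (rule ispm_integrable[OF ig ispm_Gp[OF A(1)]]) (rule A(4))
  qed (use A in auto)
  also have "\<dots> = Mp"
  proof -
    have "\<And>x. Linv * (L * Xmat q N x) = Xmat q N x"
      using A(5,11) LL by (subst assoc_mult_mat[symmetric, of _ N N]) auto
    then show ?thesis unfolding Mp_def by simp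
  qed
  finally have LRp: "Linv * mat_integral N p q p \<mu> (\<lambda>x. L * Xmat q N x) Gp = Mp" .
  have P2: "moment_mat q p \<mu> N (N + p) = append_cols_mat (moment_mat q p \<mu> N N) Mp"
  proof (rule eq_matI)
    fix a b assume a: "a < dim_row (append_cols_mat (moment_mat q p \<mu> N N) Mp)" and b: "b < dim_col (append_cols_mat (moment_mat q p \<mu> N N) Mp)"
    then have a: "a < N" and b: "b < N + p" using MNN by (auto simp: append_cols_mat_def Mp_def mat_integral_def)
    show "moment_mat q p \<mu> N (N + p) $$ (a, b) = append_cols_mat (moment_mat q p \<mu> N N) Mp $$ (a, b)"
    proof (cases "b < N")
      case True
      then show ?thesis using a b
        by (auto simp: append_cols_mat_def moment_mat_def mat_integral_def Xmat_idx intro!: sum.cong)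
    next
      case False
      have "Gp x $$ (j, b - N) = transpose_mat (Xmat p (N + p) x) $$ (j, b)" if "j < p" for x j
        unfolding Gp_def using Gp_idx[of p j "b - N" x N] A(1) b False that by (simp add: Xmat_idx)
      then show ?thesis using a b False
        by (auto simp: append_cols_mat_def moment_mat_def mat_integral_def Mp_def intro!: sum.cong)
    qed
  qed (auto simp: append_cols_mat_def moment_mat_def Mp_def mat_integral_def)
  have R2: "moment_mat q p \<mu> N (N + p) =
           Linv * append_cols_mat Uinv (mat_integral N p q p \<mu> (\<lambda>x. L * Xmat q N x) Gp)"
    using append_cols_mult[OF A(11) A(14), of "mat_integral N p q p \<mu> (\<lambda>x. L * Xmat q N x) Gp" p]
    using P2 LRp A(17) by simp
  show ?thesis using R1 R2 unfolding Fq_def Gp_def by simp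
qed

end
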